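(* Let $\mathcal M$ be a non-empty compact, locally connected Hausdorff space, $\vec\varphi:\mathcal M\to\mathbb R^k$ continuous, and $\vec x,\vec y\in\mathbb R^k$ with $x_i\le y_i$ for all $i$. Then $\lim_{\varepsilon\to0^+}\ell_{(\mathcal M,\vec\varphi)}(\vec x,(y_1+\varepsilon,\dots,y_k+\varepsilon))$ equals the number $L(\vec x,\vec y)\in\mathbb N\cup\{+\infty\}$ of equivalence classes of $\mathcal M\langle\vec\varphi\preceq\vec x\rangle$ with respect to the $\langle\vec\varphi\preceq\vec y\rangle$-connectedness relation.
   Context: For $\vec t\in\mathbb R^k$, $\mathcal M\langle\vec\varphi\preceq\vec t\rangle=\{P\in\mathcal M:\varphi_i(P)\le t_i\ \forall i\}$. $P,Q$ are $\langle\vec\varphi\preceq\vec t\rangle$-connected if a connected subset of $\mathcal M\langle\vec\varphi\preceq\vec t\rangle$ contains both. For $\vec x,\vec y$ with $x_i<y_i$ for all $i$, the size function $\ell_{(\mathcal M,\vec\varphi)}(\vec x,\vec y)$ is the number of equivalence classes of $\mathcal M\langle\vec\varphi\preceq\vec x\rangle$ under $\langle\vec\varphi\preceq\vec y\rangle$-connectedness. *)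

theory Defs
  imports "HOL-Analysis.Analysis"
begin

definition sublevel :: "'a topology \<Rightarrow> ('a \<Rightarrow> real^'k) \<Rightarrow> real^'k \<Rightarrow> 'a set" where
  "sublevel X phi t = {P \<in> topspace X. \<forall>i. phi P $ i \<le> t $ i}"

definition sub_connected :: "'a topology \<Rightarrow> ('a \<Rightarrow> real^'k) \<Rightarrow> real^'k \<Rightarrow> 'a \<Rightarrow> 'a \<Rightarrow> bool" where
  "sub_connected X phi t P Q \<longleftrightarrow>
     (\<exists>C. C \<subseteq> sublevel X phi t \<and> connectedin X C \<and> P \<in> C \<and> Q \<in> C)"

definition num_classes :: "'a topology \<Rightarrow> ('a \<Rightarrow> real^'k) \<Rightarrow> real^'k \<Rightarrow> real^'k \<Rightarrow> enat" where
  "num_classes X phi x y =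
     (let Q = sublevel X phi x // {(P, P'). P \<in> sublevel X phi x \<and> P' \<in> sublevel X phi x
                                             \<and> sub_connected X phi y P P'}
      in if finite Q then enat (card Q) else \<infinity>)"

text \<open>The size function ell(x,y) (meaningful for x_i < y_i for all i).\<close>
definition size_function :: "'a topology \<Rightarrow> ('a \<Rightarrow> real^'k) \<Rightarrow> real^'k \<Rightarrow> real^'k \<Rightarrow> enat" where
  "size_function X phi x y = num_classes X phi x y"

end

theory Submission imports Defs begin

definition ecard :: "'b set \<Rightarrow> enat" where
  "ecard Q = (if finite Q then enat (card Q) else \<infinity>)"

lemma ecard_refine:
  assumes "equiv A R" "equiv A R'" "R \<subseteq> R'"
  shows "ecard (A//R') \<le> ecard (A//R)"
proof -
  have cl: "R'``(R``{a}) = R'``{a}" if "a \<in> A" for a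
  proof
    have "a \<in> R``{a}" using equiv_class_self[OF assms(1) that] .
    then show "R'``{a} \<subseteq> R'``(R``{a})" by auto
  next
    show "R'``(R``{a}) \<subseteq> R'``{a}"
    proof
      fix z assume "z \<in> R'``(R``{a})"
      then obtain b where b: "(a,b) \<in> R" "(b,z) \<in> R'" by auto
      then have "(a,b) \<in> R'" using assms(3) by auto
      moreover have "trans R'" using assms(2) by (simp add: equiv_def)
      ultimately have "(a,z) \<in> R'" using b(2) by (meson transD)
      then show "z \<in> R'``{a}" by simp
    qed
  qed
  have eq: "A//R' = (\<lambda>C. R'``C) ` (A//R)"
  proof
    show "A//R' \<subseteq> (\<lambda>C. R'``C) ` (A//R)"
    proof
      fix D assume "D \<in> A//R'"
      then obtain a where a: "a \<in> A" "D = R'``{a}" by (auto simp: quotient_def)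
      then have "D = (\<lambda>C. R'``C) (R``{a})" using cl by simp
      moreover have "R``{a} \<in> A//R" using a(1) by (rule quotientI)
      ultimately show "D \<in> (\<lambda>C. R'``C) ` (A//R)" by (rule image_eqI)
    qed
  next
    show "(\<lambda>C. R'``C) ` (A//R) \<subseteq> A//R'"
    proof
      fix D assume "D \<in> (\<lambda>C. R'``C) ` (A//R)"
      then obtain C where C: "C \<in> A//R" "D = R'``C" by auto
      then obtain a where a: "a \<in> A" "C = R``{a}" by (auto simp: quotient_def)
      then have "D = R'``{a}" using cl C(2) by simp
      then show "D \<in> A//R'" using a(1) quotientI by simp
    qed
  qed
  show ?thesis
  proof (cases "finite (A//R)")
    case True
    then have "finite (A//R')" unfolding eq by simp
    moreover have "card (A//R') \<le> card (A//R)" unfolding eq using True by (rule card_image_le)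
    ultimately show ?thesis using True by (simp add: ecard_def)
  qed (simp add: ecard_def)
qed

lemma ecard_lower:
  assumes "equiv A R" "S \<subseteq> A" "finite S" "\<forall>s\<in>S. \<forall>t\<in>S. s \<noteq> t \<longrightarrow> (s,t) \<notin> R"
  shows "enat (card S) \<le> ecard (A//R)"
proof -
  have inj: "inj_on (\<lambda>s. R``{s}) S"
  proof (rule inj_onI)
    fix s t assume st: "s \<in> S" "t \<in> S" "R``{s} = R``{t}"
    then have "(s,t) \<in> R" using eq_equiv_class_iff[OF assms(1)] assms(2) by blast
    then show "s = t" using assms(4) st by blast
  qed
  have sub: "(\<lambda>s. R``{s}) ` S \<subseteq> A//R"
    using assms(2) by (auto intro: quotientI)
  show ?thesis
  proof (cases "finite (A//R)")
    case True
    then have "card ((\<lambda>s. R``{s}) ` S) \<le> card (A//R)" using sub by (rule card_mono)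
    then show ?thesis using inj by (simp add: ecard_def True card_image)
  qed (simp add: ecard_def)
qed

lemma ecard_upper:
  assumes "equiv A R" "enat m \<le> ecard (A//R)"
  shows "\<exists>S\<subseteq>A. finite S \<and> card S = m \<and> (\<forall>s\<in>S. \<forall>t\<in>S. s \<noteq> t \<longrightarrow> (s,t) \<notin> R)"
proof -
  obtain T where T: "T \<subseteq> A//R" "finite T" "card T = m"
  proof (cases "finite (A//R)")
    case True
    then have "m \<le> card (A//R)" using assms by (simp add: ecard_def)
    from ex_card[OF this] obtain T where T1: "T \<subseteq> A//R" "card T = m" by blast
    have "finite T" using finite_subset[OF T1(1) True] .
    then show ?thesis using that T1 by simp
  next
    case False
    from infinite_arbitrarily_large[OF False, of m] obtain T where "finite T" "card T = m" "T \<subseteq> A//R" by blast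
    then show ?thesis using that by simp
  qed
  define rep where "rep C = (SOME a. a \<in> C)" for C :: "'a set"
  have rep: "rep C \<in> C" if "C \<in> A//R" for C
  proof -
    have "C \<noteq> {}" using in_quotient_imp_non_empty[OF assms(1) that] .
    then show ?thesis unfolding rep_def by (simp add: some_in_eq)
  qed
  have inj: "inj_on rep T"
  proof (rule inj_onI)
    fix C C' assume C: "C \<in> T" "C' \<in> T" "rep C = rep C'"
    have Q: "C \<in> A//R" "C' \<in> A//R" using C T(1) by auto
    show "C = C'" using quotient_eq_iff[OF assms(1) Q rep[OF Q(1)] rep[OF Q(2)]]
      C(3) rep[OF Q(1)] in_quotient_imp_subset[OF assms(1) Q(1)] equiv_class_self
      by (metis assms(1) equiv_def refl_onD subsetD)
  qed
  have "rep ` T \<subseteq> A"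
  proof
    fix s assume "s \<in> rep ` T"
    then obtain C where C: "C \<in> T" "s = rep C" by auto
    then have "C \<in> A//R" using T by auto
    then show "s \<in> A" using rep[of C] in_quotient_imp_subset[OF assms(1)] C(2) by blast
  qed
  moreover have "card (rep ` T) = m" using inj T by (simp add: card_image)
  moreover have "\<forall>s\<in>rep ` T. \<forall>t\<in>rep ` T. s \<noteq> t \<longrightarrow> (s,t) \<notin> R"
  proof (intro ballI impI)
    fix s t assume st: "s \<in> rep ` T" "t \<in> rep ` T" "s \<noteq> t"
    then obtain C C' where C: "C \<in> T" "s = rep C" "C' \<in> T" "t = rep C'" by auto
    then have Q: "C \<in> A//R" "C' \<in> A//R" using T by auto
    have "C \<noteq> C'" using C st(3) by auto
    then show "(s,t) \<notin> R" using quotient_eq_iff[OF assms(1) Q rep[OF Q(1)] rep[OF Q(2)]] C by simp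
  qed
  moreover have "finite (rep ` T)" using T(2) by simp
  ultimately show ?thesis by (intro exI[of _ "rep ` T"]) simp
qed

lemma sublevel_closed:
  assumes "continuous_map X euclidean phi" shows "closedin X (sublevel X phi t)"
proof -
  have eq: "sublevel X phi t = {P \<in> topspace X. phi P \<in> {..t}}"
    by (auto simp: sublevel_def less_eq_vec_def)
  have "closedin euclidean {..t}" using closed_atMost closed_closedin by blast
  then have "closedin X {P \<in> topspace X. phi P \<in> {..t}}"
    by (rule closedin_continuous_map_preimage[OF assms])
  then show ?thesis by (simp only: eq)
qed

lemma sublevel_mono:
  assumes "\<forall>i. t $ i \<le> t' $ i" shows "sublevel X phi t \<subseteq> sublevel X phi t'"
proof
  fix P assume "P \<in> sublevel X phi t"
  then have P: "P \<in> topspace X" "\<And>i. phi P $ i \<le> t $ i" by (auto simp: sublevel_def)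
  have "phi P $ i \<le> t' $ i" for i using P(2)[of i] spec[OF assms, of i] by linarith
  then show "P \<in> sublevel X phi t'" using P(1) by (simp add: sublevel_def)
qed

lemma sub_connected_mono:
  assumes "\<forall>i. t $ i \<le> t' $ i" "sub_connected X phi t P Q"
  shows "sub_connected X phi t' P Q"
proof -
  obtain C where "C \<subseteq> sublevel X phi t" "connectedin X C" "P \<in> C" "Q \<in> C"
    using assms(2) unfolding sub_connected_def by blast
  moreover have "sublevel X phi t \<subseteq> sublevel X phi t'" using sublevel_mono[OF assms(1)] .
  ultimately show ?thesis unfolding sub_connected_def by blast
qed

lemma key:
  fixes y :: "real^'k"
  assumes cs: "compact_space X" and hs: "Hausdorff_space X" and ct: "continuous_map X euclidean phi"
    and conn: "\<forall>n::nat. sub_connected X phi (\<chi> i. y$i + 1 / real (Suc n)) P Q"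
  shows "sub_connected X phi y P Q"
proof -
  define K where "K n = sublevel X phi (\<chi> i. y$i + 1 / real (Suc n))" for n
  define D where "D n = connected_component_of_set (subtopology X (K n)) P" for n
  have Kc: "closedin X (K n)" for n using sublevel_closed[OF ct] K_def by simp
  have PQ: "P \<in> D n \<and> Q \<in> D n" for n
  proof -
    obtain C where C: "C \<subseteq> K n" "connectedin X C" "P \<in> C" "Q \<in> C"
      using conn unfolding sub_connected_def K_def by blast
    then have "connectedin (subtopology X (K n)) C" by (simp add: connectedin_subtopology)
    then have "C \<subseteq> D n" unfolding D_def using C(3) by (rule connected_component_of_maximal)
    then show ?thesis using C by auto
  qed
  have Dsub: "D n \<subseteq> K n" for n
    unfolding D_def using connected_component_of_subset_topspace[of "subtopology X (K n)" P] by auto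
  have Dconn: "connectedin X (D n)" for n
    using connectedin_connected_component_of[of "subtopology X (K n)" P]
    by (simp add: connectedin_subtopology D_def)
  have Dclosed: "closedin X (D n)" for n
    using closedin_connected_component_of[of "subtopology X (K n)" P] Kc closedin_trans_full
    unfolding D_def by blast
  have Kmono: "K n \<subseteq> K m" if "m \<le> n" for m n
  proof -
    have "1 / real (Suc n) \<le> 1 / real (Suc m)" using that by (simp add: frac_le)
    then show ?thesis unfolding K_def by (intro sublevel_mono) simp
  qed
  have Ddec: "decseq D"
    unfolding decseq_def
  proof (intro allI impI)
    fix m n :: nat assume "m \<le> n"
    have "connectedin (subtopology X (K m)) (D n)"
      using Dconn Dsub Kmono[OF \<open>m \<le> n\<close>] by (auto simp: connectedin_subtopology)
    from connected_component_of_maximal[OF this, of P] show "D n \<le> D m"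
      using PQ[of n] by (simp add: D_def)
  qed
  define E where "E = (\<Inter>n. D n)"
  have PQE: "P \<in> E" "Q \<in> E" using PQ by (auto simp: E_def)
  have Esub: "E \<subseteq> sublevel X phi y"
  proof
    fix z assume "z \<in> E"
    then have zK: "z \<in> K n" for n using Dsub E_def by blast
    then have "z \<in> topspace X" using K_def sublevel_def by (metis (no_types, lifting) mem_Collect_eq)
    moreover have "phi z $ i \<le> y $ i" for i
    proof (rule ccontr)
      assume "\<not> ?thesis"
      then have "0 < phi z $ i - y $ i" by simp
      then obtain n where n: "inverse (real (Suc n)) < phi z $ i - y $ i"
        using reals_Archimedean by blast
      moreover have "phi z $ i \<le> y $ i + 1 / real (Suc n)" using zK[of n] by (simp add: K_def sublevel_def)
      ultimately show False by (simp add: inverse_eq_divide)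
    qed
    ultimately show "z \<in> sublevel X phi y" by (simp add: sublevel_def)
  qed
  have Eclosed: "closedin X E"
    unfolding E_def using Dclosed by (intro closedin_Inter) auto
  have Econn: "connectedin X E"
  proof (rule ccontr)
    assume nc: "\<not> connectedin X E"
    have "E \<subseteq> topspace X" using Eclosed closedin_subset by blast
    then obtain E1 E2 where E: "openin X E1" "openin X E2" "E \<subseteq> E1 \<union> E2"
      "E1 \<inter> E2 \<inter> E = {}" "E1 \<inter> E \<noteq> {}" "E2 \<inter> E \<noteq> {}"
      using nc unfolding connectedin by blast
    define A where "A = E - E2"
    define B where "B = E - E1"
    have "closedin X A" unfolding A_def using Eclosed E(2) by (rule closedin_diff)
    then have cA: "compactin X A" by (rule closedin_compact_space[OF cs])
    have "closedin X B" unfolding B_def using Eclosed E(1) by (rule closedin_diff)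
    then have cB: "compactin X B" by (rule closedin_compact_space[OF cs])
    have "disjnt A B" using E(3) by (auto simp: A_def B_def disjnt_def)
    have "\<exists>U V. openin X U \<and> openin X V \<and> A \<subseteq> U \<and> B \<subseteq> V \<and> disjnt U V"
      using Hausdorff_space_compact_sets[THEN iffD1, OF hs, rule_format, OF conjI[OF cA conjI[OF cB \<open>disjnt A B\<close>]]] .
    then obtain U V where UV: "openin X U" "openin X V" "A \<subseteq> U" "B \<subseteq> V" "disjnt U V"
      by blast
    have EUV: "E \<subseteq> U \<union> V" using E(3,4) UV A_def B_def by auto
    define F where "F n = D n \<inter> (topspace X - (U \<union> V))" for n
    have Fc: "closedin X (F n)" for n
      unfolding F_def using Dclosed UV(1,2) by (intro closedin_Int closedin_diff) auto
    have Fd: "decseq F" using Ddec by (auto simp: decseq_def F_def)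
    have F0: "(\<Inter>n. F n) = {}" using EUV by (auto simp: F_def E_def)
    have "\<not> (\<forall>n. F n \<noteq> {})"
    proof
      assume "\<forall>n. F n \<noteq> {}"
      then have "(\<Inter>n. F n) \<noteq> {}" using compact_space_imp_nest[OF cs Fc _ Fd] by simp
      then show False using F0 by simp
    qed
    then obtain n where Fn: "F n = {}" by blast
    have "D n \<subseteq> topspace X" using Dconn connectedin_subset_topspace by blast
    then have "D n \<subseteq> U \<union> V" using Fn unfolding F_def by blast
    moreover have "U \<inter> V \<inter> D n = {}" using UV(5) by (auto simp: disjnt_def)
    moreover have "E \<subseteq> D n" unfolding E_def by blast
    moreover have "A \<noteq> {}" using E(4,5) by (auto simp: A_def)
    moreover have "B \<noteq> {}" using E(4,6) by (auto simp: B_def)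
    ultimately have "U \<inter> D n \<noteq> {}" "V \<inter> D n \<noteq> {}" using UV(3,4) A_def B_def by blast+
    then show False using connectedinD[OF Dconn UV(1) UV(2)] \<open>D n \<subseteq> U \<union> V\<close> \<open>U \<inter> V \<inter> D n = {}\<close>
      by blast
  qed
  show ?thesis unfolding sub_connected_def using Esub Econn PQE by blast
qed

theorem lemma5p2:
  fixes X :: "'a topology" and phi :: "'a \<Rightarrow> real^'k" and x y :: "real^'k"
  assumes "topspace X \<noteq> {}"
    and "compact_space X"
    and "locally_connected_space X"
    and "Hausdorff_space X"
    and "continuous_map X euclidean phi"
    and "\<forall>i. x $ i \<le> y $ i"
  shows "((\<lambda>e::real. size_function X phi x (\<chi> i. y $ i + e))
           \<longlongrightarrow> num_classes X phi x y) (at_right 0)"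
proof -
  define A where "A = sublevel X phi x"
  define R where "R t = {(P, P'). P \<in> A \<and> P' \<in> A \<and> sub_connected X phi t P P'}" for t
  define yv where "yv e = (\<chi> i. y $ i + e)" for e :: real
  have nc: "num_classes X phi x t = ecard (A // R t)" for t
    by (simp add: num_classes_def Let_def ecard_def A_def R_def)
  have eqv: "equiv A (R t)" if xt: "\<forall>i. x $ i \<le> t $ i" for t
  proof (rule equivI)
    show "R t \<subseteq> A \<times> A" by (auto simp: R_def)
    show "refl_on A (R t)"
    proof (rule refl_onI)
      fix P assume P: "P \<in> A"
      then have "P \<in> sublevel X phi t" using sublevel_mono[OF xt, of X phi] A_def by blast
      moreover have "connectedin X {P}" using P by (simp add: A_def sublevel_def)
      ultimately have "sub_connected X phi t P P" unfolding sub_connected_def by blast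
      then show "(P,P) \<in> R t" using P by (simp add: R_def)
    qed
    show "sym (R t)"
    proof (rule symI)
      fix P Q assume "(P,Q) \<in> R t"
      then have "P \<in> A" "Q \<in> A" "sub_connected X phi t P Q" by (auto simp: R_def)
      then show "(Q,P) \<in> R t" unfolding R_def sub_connected_def by blast
    qed
    show "trans (R t)"
    proof (rule transI)
      fix P Q Z assume PQ: "(P,Q) \<in> R t" and QZ: "(Q,Z) \<in> R t"
      then have PZ: "P \<in> A" "Z \<in> A" by (auto simp: R_def)
      obtain C1 where C1: "C1 \<subseteq> sublevel X phi t" "connectedin X C1" "P \<in> C1" "Q \<in> C1"
        using PQ by (auto simp: R_def sub_connected_def)
      obtain C2 where C2: "C2 \<subseteq> sublevel X phi t" "connectedin X C2" "Q \<in> C2" "Z \<in> C2"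
        using QZ by (auto simp: R_def sub_connected_def)
      have "connectedin X (C1 \<union> C2)" using C1 C2 by (intro connectedin_Un) auto
      then have "sub_connected X phi t P Z" unfolding sub_connected_def
        using C1 C2 by (intro exI[of _ "C1 \<union> C2"]) auto
      then show "(P,Z) \<in> R t" using PZ by (simp add: R_def)
    qed
  qed
  have ev_pos: "eventually (\<lambda>e::real. 0 < e) (at_right 0)" by (rule eventually_at_right_less)
  have ge: "\<forall>i. x $ i \<le> yv e $ i" if "0 < e" for e
  proof
    fix i show "x $ i \<le> yv e $ i" using spec[OF assms(6), of i] that by (simp add: yv_def)
  qed
  have Rsub: "R y \<subseteq> R (yv e)" if "0 < e" for e
  proof
    fix pq assume "pq \<in> R y"
    then obtain p q where pq: "pq = (p,q)" "p \<in> A" "q \<in> A" "sub_connected X phi y p q"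
      by (auto simp: R_def)
    have "\<forall>i. y $ i \<le> yv e $ i" using that by (simp add: yv_def)
    from sub_connected_mono[OF this pq(4)] show "pq \<in> R (yv e)" using pq by (simp add: R_def)
  qed
  have main: "((\<lambda>e. ecard (A // R (yv e))) \<longlongrightarrow> ecard (A // R y)) (at_right 0)"
  proof (rule order_tendstoI)
    fix a assume a: "ecard (A // R y) < a"
    show "eventually (\<lambda>e. ecard (A // R (yv e)) < a) (at_right 0)"
    proof (rule eventually_mono[OF ev_pos])
      fix e :: real assume e: "0 < e"
      have "ecard (A // R (yv e)) \<le> ecard (A // R y)"
        by (rule ecard_refine[OF eqv[OF assms(6)] eqv[OF ge[OF e]] Rsub[OF e]])
      then show "ecard (A // R (yv e)) < a" using a by (rule le_less_trans)
    qed
  next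
    fix a assume a: "a < ecard (A // R y)"
    then obtain k where k: "a = enat k" by (cases a) auto
    have "enat (Suc k) \<le> ecard (A // R y)" using ileI1[OF a] k by (simp add: eSuc_enat)
    from ecard_upper[OF eqv[OF assms(6)] this] obtain S where
      S: "S \<subseteq> A" "finite S" "card S = Suc k" "\<forall>s\<in>S. \<forall>t\<in>S. s \<noteq> t \<longrightarrow> (s,t) \<notin> R y"
      by blast
    have pair: "eventually (\<lambda>e. (p,q) \<notin> R (yv e)) (at_right 0)" if pq: "p \<in> S" "q \<in> S" "p \<noteq> q" for p q
    proof -
      have "(p,q) \<notin> R y" using S(4) pq by blast
      then have "\<not> sub_connected X phi y p q" using S(1) pq by (auto simp: R_def)
      then obtain n where n: "\<not> sub_connected X phi (\<chi> i. y$i + 1 / real (Suc n)) p q"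
        using key[OF assms(2) assms(4) assms(5)] by blast
      show ?thesis unfolding eventually_at_right_field
      proof (intro exI[of _ "1 / real (Suc n)"] conjI allI impI)
        show "0 < 1 / real (Suc n)" by simp
        fix e :: real assume "0 < e" "e < 1 / real (Suc n)"
        then have le: "\<forall>i. yv e $ i \<le> (\<chi> i. y$i + 1 / real (Suc n)) $ i" by (simp add: yv_def)
        have "\<not> sub_connected X phi (yv e) p q" using n sub_connected_mono[OF le, of X phi p q] by blast
        then show "(p,q) \<notin> R (yv e)" by (simp add: R_def)
      qed
    qed
    have evall: "eventually (\<lambda>e. \<forall>pq\<in>S\<times>S. fst pq \<noteq> snd pq \<longrightarrow> pq \<notin> R (yv e)) (at_right 0)"
    proof (rule eventually_ball_finite)
      show "finite (S \<times> S)" using S(2) by simp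
      show "\<forall>pq\<in>S\<times>S. eventually (\<lambda>e. fst pq \<noteq> snd pq \<longrightarrow> pq \<notin> R (yv e)) (at_right 0)"
      proof
        fix pq assume "pq \<in> S \<times> S"
        then obtain p q where pq: "pq = (p,q)" "p \<in> S" "q \<in> S" by auto
        show "eventually (\<lambda>e. fst pq \<noteq> snd pq \<longrightarrow> pq \<notin> R (yv e)) (at_right 0)"
        proof (cases "p = q")
          case True then show ?thesis using pq by simp
        next
          case False
          from pair[OF pq(2,3) False] show ?thesis
            by (rule eventually_mono) (simp add: pq(1))
        qed
      qed
    qed
    have "eventually (\<lambda>e. (\<forall>pq\<in>S\<times>S. fst pq \<noteq> snd pq \<longrightarrow> pq \<notin> R (yv e)) \<and> 0 < e) (at_right 0)"
      using evall ev_pos by (rule eventually_conj)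
    then show "eventually (\<lambda>e. a < ecard (A // R (yv e))) (at_right 0)"
    proof (rule eventually_mono)
      fix e :: real assume h: "(\<forall>pq\<in>S\<times>S. fst pq \<noteq> snd pq \<longrightarrow> pq \<notin> R (yv e)) \<and> 0 < e"
      have "\<forall>s\<in>S. \<forall>t\<in>S. s \<noteq> t \<longrightarrow> (s,t) \<notin> R (yv e)"
      proof (intro ballI impI)
        fix s t assume "s \<in> S" "t \<in> S" "s \<noteq> t"
        then show "(s,t) \<notin> R (yv e)" using h by fastforce
      qed
      from ecard_lower[OF eqv[OF ge] S(1) S(2) this] h
      have "enat (Suc k) \<le> ecard (A // R (yv e))" using S(3) by simp
      moreover have "a < enat (Suc k)" using k by simp
      ultimately show "a < ecard (A // R (yv e))" by (rule less_le_trans[rotated])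
    qed
  qed
  then show ?thesis by (simp add: size_function_def nc yv_def)
qed

end
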